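(* Let $n\geq 2$, let $X\subset\mathbb{R}^n$ be finite, equipped with the Euclidean metric $d$, let $k\in\mathbb{N}$ and $\epsilon>0$, and let $S\in\mathcal{Q}(\epsilon)$. If $|S^1_X|>k$, then $S_X\subset\mathcal{C}(\epsilon)$. If $|S^{\mathfrak{m}}_X|\leq k$ or $S_X=\emptyset$, then $S_X\subset\mathcal{N}(\epsilon)$.
   Context: $\mathcal{Q}(\epsilon)$ is the collection of closed cubes $\{(x_1,\dots,x_n)\in\mathbb{R}^n: j_i\frac{\epsilon}{2\sqrt n}\le x_i\le (j_i+1)\frac{\epsilon}{2\sqrt n},\ i=1,\dots,n\}$ for $j\in\mathbb{Z}^n$. For a cube $S\in\mathcal{Q}(\epsilon)$ and an integer $m\geq 0$, $S^m=\{x\in\mathbb{R}^n:\max_i|x_i-s_i|\le m\frac{\epsilon}{2\sqrt n}\text{ for some } s\in S\}$. For $Y,A\subset\mathbb{R}^n$, $Y_A=Y\cap A$; thus $S_X=S\cap X$, $S^m_X=S^m\cap X$. $\mathfrak{m}$ is the smallest integer with $\mathfrak{m}\geq 2\sqrt n$. The set of core points is $\mathcal{C}(\epsilon)=\{p\in X: |\{q\in X: d(p,q)\le\epsilon\}|>k\}$ and the set of noise points is $\mathcal{N}(\epsilon)=X\setminus\mathcal{C}(\epsilon)$. *)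

theory Defs
  imports "HOL-Analysis.Analysis"
begin

text \<open>Points of R^n are represented as vectors of type real^'n, with n = CARD('n).
  The distance dist on real^'n is the Euclidean metric.\<close>

definition cube_side :: "real \<Rightarrow> nat \<Rightarrow> real" where
  "cube_side eps n = eps / (2 * sqrt (real n))"

definition grid_cube :: "real \<Rightarrow> int ^ 'n \<Rightarrow> (real ^ 'n) set" where
  "grid_cube eps j = {x. \<forall>i. real_of_int (j $ i) * cube_side eps CARD('n) \<le> x $ i
                          \<and> x $ i \<le> (real_of_int (j $ i) + 1) * cube_side eps CARD('n)}"

definition grid_cubes :: "real \<Rightarrow> (real ^ 'n) set set" where
  "grid_cubes eps = range (grid_cube eps)"

definition cube_nbhd :: "real \<Rightarrow> nat \<Rightarrow> (real ^ 'n) set \<Rightarrow> (real ^ 'n) set" where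
  "cube_nbhd eps m S = {x. \<exists>s\<in>S. \<forall>i. \<bar>x $ i - s $ i\<bar> \<le> real m * cube_side eps CARD('n)}"

definition frak_m :: "nat \<Rightarrow> nat" where
  "frak_m n = (LEAST m::nat. real m \<ge> 2 * sqrt (real n))"

definition core_points :: "(real ^ 'n) set \<Rightarrow> nat \<Rightarrow> real \<Rightarrow> (real ^ 'n) set" where
  "core_points X k eps = {p \<in> X. card {q \<in> X. dist p q \<le> eps} > k}"

definition noise_points :: "(real ^ 'n) set \<Rightarrow> nat \<Rightarrow> real \<Rightarrow> (real ^ 'n) set" where
  "noise_points X k eps = X - core_points X k eps"

end

theory Submission
  imports Defs
begin

lemma norm_le_box:
  fixes x :: "real ^ 'n"
  assumes "\<And>i. \<bar>x $ i\<bar> \<le> b"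
  shows "norm x \<le> sqrt (real CARD('n)) * b"
proof -
  have b0: "0 \<le> b" using assms[of undefined] by linarith
  have "(\<Sum>i\<in>UNIV. (norm (x $ i))\<^sup>2) \<le> (\<Sum>i\<in>(UNIV::'n set). b\<^sup>2)"
    proof (rule sum_mono)
    fix i
    have "\<bar>x $ i\<bar> \<le> \<bar>b\<bar>" using assms[of i] b0 by simp
    then show "(norm (x $ i))\<^sup>2 \<le> b\<^sup>2" by (simp add: abs_le_square_iff)
  qed
  also have "\<dots> = real CARD('n) * b\<^sup>2" by simp
  finally have "norm x \<le> sqrt (real CARD('n) * b\<^sup>2)"
    unfolding norm_vec_def L2_set_def by (rule real_sqrt_le_mono)
  also have "\<dots> = sqrt (real CARD('n)) * b" using b0 by (simp add: real_sqrt_mult)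
  finally show ?thesis .
qed

lemma frak_m_ge: "real (frak_m n) \<ge> 2 * sqrt (real n)"
proof -
  obtain m :: nat where "2 * sqrt (real n) \<le> real m" using real_arch_simple by blast
  then show ?thesis unfolding frak_m_def by (rule LeastI)
qed

theorem mainTheorem1:
  fixes X :: "(real ^ 'n) set" and k :: nat and eps :: real and S :: "(real ^ 'n) set"
  assumes "CARD('n) \<ge> 2"
    and "finite X"
    and "eps > 0"
    and "S \<in> grid_cubes eps"
  shows "(card (cube_nbhd eps 1 S \<inter> X) > k \<longrightarrow> S \<inter> X \<subseteq> core_points X k eps)
    \<and> ((card (cube_nbhd eps (frak_m CARD('n)) S \<inter> X) \<le> k \<or> S \<inter> X = {})
         \<longrightarrow> S \<inter> X \<subseteq> noise_points X k eps)"
proof -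
  define c where "c = cube_side eps CARD('n)"
  have sq: "sqrt (real CARD('n)) > 0" by simp
  have ceq: "sqrt (real CARD('n)) * (2 * c) = eps"
    unfolding c_def cube_side_def using sq by (simp add: field_simps)
  have c0: "c > 0" unfolding c_def cube_side_def using assms(3) sq by simp
  obtain j where Sj: "S = grid_cube eps j" using assms(4) unfolding grid_cubes_def by auto
  have part1: "S \<inter> X \<subseteq> core_points X k eps" if h: "card (cube_nbhd eps 1 S \<inter> X) > k"
  proof
    fix p assume p: "p \<in> S \<inter> X"
    have "cube_nbhd eps 1 S \<inter> X \<subseteq> {q \<in> X. dist p q \<le> eps}"
    proof
      fix q assume q: "q \<in> cube_nbhd eps 1 S \<inter> X"
      then obtain s where s: "s \<in> S" and hs: "\<And>i. \<bar>q $ i - s $ i\<bar> \<le> c"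
        unfolding cube_nbhd_def c_def by auto
      have "\<bar>(p - q) $ i\<bar> \<le> 2 * c" for i
      proof -
        have "real_of_int (j $ i) * c \<le> p $ i \<and> p $ i \<le> (real_of_int (j $ i) + 1) * c"
          "real_of_int (j $ i) * c \<le> s $ i \<and> s $ i \<le> (real_of_int (j $ i) + 1) * c"
          using p s unfolding Sj grid_cube_def c_def by auto
        moreover have "(real_of_int (j $ i) + 1) * c = real_of_int (j $ i) * c + c"
          by (simp add: distrib_right)
        ultimately have "\<bar>p $ i - s $ i\<bar> \<le> c" by linarith
        then show ?thesis using hs[of i] by simp
      qed
      then have "norm (p - q) \<le> sqrt (real CARD('n)) * (2 * c)" by (rule norm_le_box)
      then show "q \<in> {q \<in> X. dist p q \<le> eps}" using q ceq by (simp add: dist_norm)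
    qed
    then have "card (cube_nbhd eps 1 S \<inter> X) \<le> card {q \<in> X. dist p q \<le> eps}"
      by (rule card_mono[rotated]) (use assms(2) in simp)
    then show "p \<in> core_points X k eps" using h p unfolding core_points_def by auto
  qed
  have part2: "S \<inter> X \<subseteq> noise_points X k eps"
    if h: "card (cube_nbhd eps (frak_m CARD('n)) S \<inter> X) \<le> k"
  proof
    fix p assume p: "p \<in> S \<inter> X"
    have "{q \<in> X. dist p q \<le> eps} \<subseteq> cube_nbhd eps (frak_m CARD('n)) S \<inter> X"
    proof
      fix q assume q: "q \<in> {q \<in> X. dist p q \<le> eps}"
      have "\<bar>q $ i - p $ i\<bar> \<le> real (frak_m CARD('n)) * c" for i
      proof -
        have "\<bar>q $ i - p $ i\<bar> \<le> norm (q - p)"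
          using component_le_norm_cart[of "q - p" i] by simp
        also have "\<dots> \<le> eps" using q by (simp add: dist_norm norm_minus_commute)
        also have "\<dots> = 2 * sqrt (real CARD('n)) * c" using ceq by simp
        also have "\<dots> \<le> real (frak_m CARD('n)) * c"
          using frak_m_ge[of "CARD('n)"] c0 by (intro mult_right_mono) auto
        finally show ?thesis .
      qed
      then show "q \<in> cube_nbhd eps (frak_m CARD('n)) S \<inter> X"
        using p q unfolding cube_nbhd_def c_def by auto
    qed
    then have "card {q \<in> X. dist p q \<le> eps} \<le> k"
      using h card_mono[OF finite_Int[OF disjI2[OF assms(2)]]] by (meson le_trans)
    then show "p \<in> noise_points X k eps" using p
      unfolding noise_points_def core_points_def by auto
  qed
  show ?thesis using part1 part2 by auto
qed

end
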